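(* Let $\gamma>0$, let $\Pi\subseteq\mathbb R^d$ be closed and convex with $0\in\Pi$, let $\theta:\mathbb R^d\to\mathbb R^d$, and define $F(v,z):=\frac12\gamma^2\,\mathrm{dist}^2\{\Pi,\frac{z+\theta(v)}{\gamma}\}-\frac12|z+\theta(v)|^2+\frac12|z|^2$, $G(v,z,\bar z):=\frac1\gamma(F(v,z+\gamma\bar z)-F(v,z))$, and $G^*(v,z,q):=\sup_{\bar z\in\mathbb R^d}(\bar z^{tr}q-G(v,z,\bar z))\in\mathbb R\cup\{\infty\}$. Then: (i) for all $v,z,\bar z\in\mathbb R^d$, $$-\gamma|\bar z|^2-\frac2\gamma(|z|^2+|\theta(v)|^2)\le G(v,z,\bar z)\le\gamma|\bar z|^2+\frac2\gamma(|z|^2+|\theta(v)|^2);$$ (ii) for every $(v,z)$, $q\mapsto G^*(v,z,q)$ is convex; (iii) for all $v,z,q\in\mathbb R^d$, $$G^*(v,z,q)\ge\max\Big\{0,\ \frac{|q|^2}{4\gamma}-\frac2\gamma(|z|^2+|\theta(v)|^2)\Big\}.$$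
   Context: $\mathrm{dist}\{\Pi,x\}$ denotes the Euclidean distance from $x\in\mathbb R^d$ to the set $\Pi$. *)

theory Defs
  imports "HOL-Analysis.Analysis"
begin

definition F_fun :: "real \<Rightarrow> 'a::euclidean_space set \<Rightarrow> ('a \<Rightarrow> 'a) \<Rightarrow> 'a \<Rightarrow> 'a \<Rightarrow> real" where
  "F_fun \<gamma> Pi_set \<theta> v z =
     1/2 * \<gamma>^2 * (infdist ((1/\<gamma>) *\<^sub>R (z + \<theta> v)) Pi_set)^2
     - 1/2 * (norm (z + \<theta> v))^2 + 1/2 * (norm z)^2"

definition G_fun :: "real \<Rightarrow> 'a::euclidean_space set \<Rightarrow> ('a \<Rightarrow> 'a) \<Rightarrow> 'a \<Rightarrow> 'a \<Rightarrow> 'a \<Rightarrow> real" where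
  "G_fun \<gamma> Pi_set \<theta> v z zb = (F_fun \<gamma> Pi_set \<theta> v (z + \<gamma> *\<^sub>R zb) - F_fun \<gamma> Pi_set \<theta> v z) / \<gamma>"

definition Gstar_fun :: "real \<Rightarrow> 'a::euclidean_space set \<Rightarrow> ('a \<Rightarrow> 'a) \<Rightarrow> 'a \<Rightarrow> 'a \<Rightarrow> 'a \<Rightarrow> ereal" where
  "Gstar_fun \<gamma> Pi_set \<theta> v z q = (SUP zb. ereal (zb \<bullet> q - G_fun \<gamma> Pi_set \<theta> v z zb))"

definition ereal_convex_fun :: "('a::real_vector \<Rightarrow> ereal) \<Rightarrow> bool" where
  "ereal_convex_fun f \<longleftrightarrow> convex {(x, r::real). f x \<le> ereal r}"

end

theory Submission
  imports Defs
begin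

lemma up_helper:
  fixes Fz' Fz N1 N2 Z A C T P Q K :: real
  assumes "Z \<ge> 0" "T \<ge> 0" "Fz' \<le> 1/2 * N1" "- 1/2 * N2 + 1/2 * Z \<le> Fz"
    "N1 = Z + 2 * A + K" "N2 = Z + 2 * C + T" "A \<le> P" "C \<le> Q"
    "2 * P \<le> Z + K" "2 * Q \<le> Z + T"
  shows "Fz' - Fz \<le> K + 2 * (Z + T)"
  using assms by argo

lemma lo_helper:
  fixes Fz' Fz N3 Z Z' D E H R T Q K :: real
  assumes "Z \<ge> 0" "T \<ge> 0" "- 1/2 * N3 + 1/2 * Z' \<le> Fz'" "Fz \<le> 1/2 * Z"
    "N3 = Z' + 2 * D + T" "D = E + H" "H \<le> R" "E \<le> Q"
    "2 * Q \<le> Z + T" "2 * R \<le> 2 * K + T / 2"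
  shows "- K - 2 * (Z + T) \<le> Fz' - Fz"
  using assms by argo

lemma F_bounds:
  fixes \<gamma> :: real and Pi_set :: "'a::euclidean_space set"
  assumes "\<gamma> > 0" "0 \<in> Pi_set"
  shows "F_fun \<gamma> Pi_set \<theta> v z \<le> 1/2 * (norm z)^2"
    and "F_fun \<gamma> Pi_set \<theta> v z \<ge> - 1/2 * (norm (z + \<theta> v))^2 + 1/2 * (norm z)^2"
proof -
  let ?x = "(1/\<gamma>) *\<^sub>R (z + \<theta> v)"
  have d0: "infdist ?x Pi_set \<ge> 0" by (rule infdist_nonneg)
  have d1: "infdist ?x Pi_set \<le> dist ?x 0" using assms(2) by (rule infdist_le)
  have "dist ?x 0 = norm (z + \<theta> v) / \<gamma>" using assms(1) by simp
  hence "(infdist ?x Pi_set)^2 \<le> (norm (z + \<theta> v) / \<gamma>)^2"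
    using d0 d1 by (metis power_mono)
  hence "\<gamma>^2 * (infdist ?x Pi_set)^2 \<le> (norm (z + \<theta> v))^2"
    using assms(1) by (simp add: power_divide field_simps)
  moreover have "\<gamma>^2 * (infdist ?x Pi_set)^2 \<ge> 0" by simp
  ultimately show "F_fun \<gamma> Pi_set \<theta> v z \<le> 1/2 * (norm z)^2"
    and "F_fun \<gamma> Pi_set \<theta> v z \<ge> - 1/2 * (norm (z + \<theta> v))^2 + 1/2 * (norm z)^2"
    unfolding F_fun_def by auto
qed

lemma G_bounds:
  fixes \<gamma> :: real and Pi_set :: "'a::euclidean_space set"
  assumes g: "\<gamma> > 0" and "0 \<in> Pi_set"
  shows "- \<gamma> * (norm zb)^2 - 2/\<gamma> * ((norm z)^2 + (norm (\<theta> v))^2) \<le> G_fun \<gamma> Pi_set \<theta> v z zb"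
    and "G_fun \<gamma> Pi_set \<theta> v z zb \<le> \<gamma> * (norm zb)^2 + 2/\<gamma> * ((norm z)^2 + (norm (\<theta> v))^2)"
proof -
  let ?z' = "z + \<gamma> *\<^sub>R zb"
  let ?t = "\<theta> v"
  note a1 = F_bounds(1)[OF assms, where \<theta>=\<theta> and v=v and z="?z'"] F_bounds(2)[OF assms, where \<theta>=\<theta> and v=v and z=z]
  note a2 = F_bounds(2)[OF assms, where \<theta>=\<theta> and v=v and z="?z'"] F_bounds(1)[OF assms, where \<theta>=\<theta> and v=v and z=z]
  have e1: "(norm ?z')^2 = (norm z)^2 + 2*(\<gamma>*(z \<bullet> zb)) + \<gamma>^2 * (norm zb)^2"
  proof -
    have "(norm ?z')^2 = ?z' \<bullet> ?z'" by (simp add: power2_norm_eq_inner)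
    also have "... = z \<bullet> z + 2*(\<gamma>*(z \<bullet> zb)) + \<gamma>^2 * (zb \<bullet> zb)"
      by (simp add: inner_add_left inner_add_right inner_commute algebra_simps power2_eq_square)
    finally show ?thesis by (simp add: power2_norm_eq_inner)
  qed
  have e2: "(norm (z + ?t))^2 = (norm z)^2 + 2*(z \<bullet> ?t) + (norm ?t)^2"
    by (simp add: power2_norm_eq_inner inner_add_left inner_add_right algebra_simps inner_commute)
  have e3: "(norm (?z' + ?t))^2 = (norm ?z')^2 + 2*(?z' \<bullet> ?t) + (norm ?t)^2"
    by (simp add: power2_norm_eq_inner inner_add_left inner_add_right algebra_simps inner_commute)
  have c1: "\<bar>z \<bullet> zb\<bar> \<le> norm z * norm zb" by (rule Cauchy_Schwarz_ineq2)
  have c2: "\<bar>z \<bullet> ?t\<bar> \<le> norm z * norm ?t" by (rule Cauchy_Schwarz_ineq2)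
  have c3: "\<bar>zb \<bullet> ?t\<bar> \<le> norm zb * norm ?t" by (rule Cauchy_Schwarz_ineq2)
  have s1: "2 * (\<gamma> * (norm z * norm zb)) \<le> (norm z)^2 + \<gamma>^2 * (norm zb)^2"
    using sum_squares_bound[of "norm z" "\<gamma> * norm zb"] by (simp add: power_mult_distrib algebra_simps)
  have s2: "2 * (norm z * norm ?t) \<le> (norm z)^2 + (norm ?t)^2"
    using sum_squares_bound[of "norm z" "norm ?t"] by simp
  have s3: "2 * (\<gamma> * (norm zb * norm ?t)) \<le> 2 * (\<gamma>^2 * (norm zb)^2) + (norm ?t)^2 / 2"
    using sum_squares_bound[of "2 * \<gamma> * norm zb" "norm ?t"]
    by (simp add: power_mult_distrib algebra_simps)
  have nn: "(norm z)^2 \<ge> 0" "(norm ?t)^2 \<ge> 0" by simp_all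
  have zb': "?z' \<bullet> ?t = z \<bullet> ?t + \<gamma> * (zb \<bullet> ?t)" by (simp add: inner_add_left)
  have up: "F_fun \<gamma> Pi_set \<theta> v ?z' - F_fun \<gamma> Pi_set \<theta> v z \<le> \<gamma>^2 * (norm zb)^2 + 2 * ((norm z)^2 + (norm ?t)^2)"
  proof -
    have h1: "\<gamma> * (z \<bullet> zb) \<le> \<gamma> * (norm z * norm zb)" using c1 g by (simp add: abs_le_iff)
    have h2: "z \<bullet> ?t \<le> norm z * norm ?t" using c2 by (simp add: abs_le_iff)
    show ?thesis by (rule up_helper[OF nn(1) nn(2) a1(1) a1(2) e1 e2 h1 h2 s1 s2])
  qed
  have lo: "F_fun \<gamma> Pi_set \<theta> v ?z' - F_fun \<gamma> Pi_set \<theta> v z \<ge> - (\<gamma>^2 * (norm zb)^2) - 2 * ((norm z)^2 + (norm ?t)^2)"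
  proof -
    have h1: "\<gamma> * (zb \<bullet> ?t) \<le> \<gamma> * (norm zb * norm ?t)" using c3 g by (simp add: abs_le_iff)
    have h2: "z \<bullet> ?t \<le> norm z * norm ?t" using c2 by (simp add: abs_le_iff)
    show ?thesis by (rule lo_helper[OF nn(1) nn(2) a2(1) a2(2) e3 zb' h1 h2 s2 s3])
  qed
  show "G_fun \<gamma> Pi_set \<theta> v z zb \<le> \<gamma> * (norm zb)^2 + 2/\<gamma> * ((norm z)^2 + (norm (\<theta> v))^2)"
  proof -
    have "(F_fun \<gamma> Pi_set \<theta> v ?z' - F_fun \<gamma> Pi_set \<theta> v z) / \<gamma> \<le> (\<gamma>^2 * (norm zb)^2 + 2 * ((norm z)^2 + (norm ?t)^2)) / \<gamma>"
      using g by (intro divide_right_mono[OF up]) simp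
    also have "... = \<gamma> * (norm zb)^2 + 2/\<gamma> * ((norm z)^2 + (norm (\<theta> v))^2)"
      using g by (simp add: add_divide_distrib power2_eq_square)
    finally show ?thesis unfolding G_fun_def .
  qed
  show "- \<gamma> * (norm zb)^2 - 2/\<gamma> * ((norm z)^2 + (norm (\<theta> v))^2) \<le> G_fun \<gamma> Pi_set \<theta> v z zb"
  proof -
    have "(- (\<gamma>^2 * (norm zb)^2) - 2 * ((norm z)^2 + (norm ?t)^2)) / \<gamma> \<le> (F_fun \<gamma> Pi_set \<theta> v ?z' - F_fun \<gamma> Pi_set \<theta> v z) / \<gamma>"
      using g by (intro divide_right_mono[OF lo]) simp
    moreover have e: "(- (\<gamma>^2 * (norm zb)^2) - 2 * ((norm z)^2 + (norm ?t)^2)) / \<gamma> = - \<gamma> * (norm zb)^2 - 2/\<gamma> * ((norm z)^2 + (norm (\<theta> v))^2)"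
      using g by (simp add: diff_divide_distrib power2_eq_square)
    ultimately show ?thesis unfolding G_fun_def by (metis (no_types, lifting))
  qed
qed

lemma conv_helper:
  fixes a b g r1 r2 u w :: real
  assumes "a - g \<le> r1" "b - g \<le> r2" "0 \<le> u" "0 \<le> w" "u + w = 1"
  shows "u*a + w*b - g \<le> u*r1 + w*r2"
proof -
  have 1: "u*(a-g) \<le> u*r1" using assms by (simp add: mult_left_mono)
  have 2: "w*(b-g) \<le> w*r2" using assms by (simp add: mult_left_mono)
  have 3: "u*(a-g) + w*(b-g) = u*a + w*b - (u+w)*g" by (simp add: algebra_simps)
  show ?thesis using 1 2 3 assms(5) by simp
qed

lemma Gstar_convex:
  fixes Pi_set :: "'a::euclidean_space set" and z :: 'a
  shows "ereal_convex_fun (\<lambda>q. Gstar_fun \<gamma> Pi_set \<theta> v z q)"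
proof -
  let ?G = "G_fun \<gamma> Pi_set \<theta> v z"
  have eq: "{(q, r::real). Gstar_fun \<gamma> Pi_set \<theta> v z q \<le> ereal r}
          = {(q, r). \<forall>zb. zb \<bullet> q - ?G zb \<le> r}"
    unfolding Gstar_fun_def by (auto simp: SUP_le_iff)
  have "convex {(q, r). \<forall>zb. zb \<bullet> q - ?G zb \<le> r}"
  proof (rule convexI, clarsimp)
    fix q1 r1 q2 r2 and u w :: real and zb
    assume h1: "\<forall>zb. zb \<bullet> q1 - ?G zb \<le> r1" and h2: "\<forall>zb. zb \<bullet> q2 - ?G zb \<le> r2"
      and u: "0 \<le> u" and w: "0 \<le> w" and uw: "u + w = 1"
    have i: "zb \<bullet> (u *\<^sub>R q1 + w *\<^sub>R q2) = u * (zb \<bullet> q1) + w * (zb \<bullet> q2)"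
      by (simp add: inner_add_right)
    show "zb \<bullet> (u *\<^sub>R q1 + w *\<^sub>R q2) - ?G zb \<le> u * r1 + w * r2"
      unfolding i by (rule conv_helper[OF h1[rule_format] h2[rule_format] u w uw])
  qed
  thus ?thesis unfolding ereal_convex_fun_def eq .
qed

theorem lemma10:
  fixes \<gamma> :: real and Pi_set :: "'a::euclidean_space set" and \<theta> :: "'a \<Rightarrow> 'a"
  assumes "\<gamma> > 0" and "closed Pi_set" and "convex Pi_set" and "0 \<in> Pi_set"
  shows "(\<forall>v z zb.
            - \<gamma> * (norm zb)^2 - 2/\<gamma> * ((norm z)^2 + (norm (\<theta> v))^2) \<le> G_fun \<gamma> Pi_set \<theta> v z zb
          \<and> G_fun \<gamma> Pi_set \<theta> v z zb \<le> \<gamma> * (norm zb)^2 + 2/\<gamma> * ((norm z)^2 + (norm (\<theta> v))^2))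
       \<and> (\<forall>v z. ereal_convex_fun (\<lambda>q. Gstar_fun \<gamma> Pi_set \<theta> v z q))
       \<and> (\<forall>v z q. Gstar_fun \<gamma> Pi_set \<theta> v z q \<ge>
            ereal (max 0 ((norm q)^2 / (4*\<gamma>) - 2/\<gamma> * ((norm z)^2 + (norm (\<theta> v))^2))))"
proof (intro conjI allI)
  fix v z zb :: 'a
  show "- \<gamma> * (norm zb)^2 - 2/\<gamma> * ((norm z)^2 + (norm (\<theta> v))^2) \<le> G_fun \<gamma> Pi_set \<theta> v z zb"
    "G_fun \<gamma> Pi_set \<theta> v z zb \<le> \<gamma> * (norm zb)^2 + 2/\<gamma> * ((norm z)^2 + (norm (\<theta> v))^2)"
    using G_bounds[OF assms(1,4)] by auto
next
  fix v z :: 'a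
  show "ereal_convex_fun (\<lambda>q. Gstar_fun \<gamma> Pi_set \<theta> v z q)" by (rule Gstar_convex)
next
  fix v z q :: 'a
  let ?C = "(norm z)^2 + (norm (\<theta> v))^2"
  have g: "\<gamma> > 0" by fact
  have "G_fun \<gamma> Pi_set \<theta> v z 0 = 0" unfolding G_fun_def by simp
  hence A: "ereal 0 \<le> Gstar_fun \<gamma> Pi_set \<theta> v z q"
    unfolding Gstar_fun_def by (metis (no_types, lifting) SUP_upper2 UNIV_I diff_zero inner_zero_left order_refl)
  let ?zb = "(1/(2*\<gamma>)) *\<^sub>R q"
  have Gb: "G_fun \<gamma> Pi_set \<theta> v z ?zb \<le> \<gamma> * (norm ?zb)^2 + 2/\<gamma> * ?C"
    using G_bounds(2)[OF assms(1,4)] by blast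
  have n: "\<gamma> * (norm ?zb)^2 = (norm q)^2 / (4*\<gamma>)" using g
    by (simp add: power_divide power2_eq_square field_simps)
  have ip: "?zb \<bullet> q = (norm q)^2 / (2*\<gamma>)" by (simp add: power2_norm_eq_inner)
  have "(norm q)^2 / (4*\<gamma>) - 2/\<gamma> * ?C \<le> ?zb \<bullet> q - G_fun \<gamma> Pi_set \<theta> v z ?zb"
  proof -
    have "(norm q)^2/(2*\<gamma>) = 2*((norm q)^2/(4*\<gamma>))" by simp
    thus ?thesis using Gb n ip by argo
  qed
  hence B: "ereal ((norm q)^2 / (4*\<gamma>) - 2/\<gamma> * ?C) \<le> Gstar_fun \<gamma> Pi_set \<theta> v z q"
    unfolding Gstar_fun_def by (intro SUP_upper2[of ?zb]) auto
  show "ereal (max 0 ((norm q)^2 / (4*\<gamma>) - 2/\<gamma> * ?C)) \<le> Gstar_fun \<gamma> Pi_set \<theta> v z q"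
    using A B by (simp add: max_def)
qed

end
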